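(* Let $k\ge1$, $n\ge 2k+1$, let $G$ be a spanning subgraph of $J(n;k,k+1)$, and let $m\ge3$. If for some $\gamma\in\binom{[n]}{k-1}$ the graph $H_\gamma=H_\gamma(G)$ contains a cycle of length $m$, then $G$ contains a cycle of length $2m$. Here $H_\gamma$ is the graph whose vertex set is the set of all $k$-subsets of $[n]$ containing $\gamma$, in which two distinct vertices $x,y$ are adjacent iff there is a path of length $2$ between $x$ and $y$ in $G$.
   Context: $J(n;k,k+1)$ is the bipartite graph with vertex set $\binom{[n]}{k}\cup\binom{[n]}{k+1}$ (subsets of $[n]=\{1,\dots,n\}$), with $u,v$ adjacent iff $u\subset v$ or $v\subset u$. A spanning subgraph has the same vertex set. *)

theory Defs
  imports Main
begin

definition J_vert :: "nat \<Rightarrow> nat \<Rightarrow> nat set set" where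
  "J_vert n k = {A. A \<subseteq> {1..n} \<and> (card A = k \<or> card A = k + 1)}"

definition J_adj :: "nat \<Rightarrow> nat \<Rightarrow> nat set \<Rightarrow> nat set \<Rightarrow> bool" where
  "J_adj n k u v \<longleftrightarrow> u \<in> J_vert n k \<and> v \<in> J_vert n k \<and> (u \<subset> v \<or> v \<subset> u)"

text \<open>A spanning subgraph of J(n;k,k+1) is given by a symmetric edge relation E
  contained in the edge relation of J(n;k,k+1); its vertex set is J_vert n k.\<close>
definition spanning_subgraph_J :: "nat \<Rightarrow> nat \<Rightarrow> (nat set \<Rightarrow> nat set \<Rightarrow> bool) \<Rightarrow> bool" where
  "spanning_subgraph_J n k E \<longleftrightarrow>
     (\<forall>u v. E u v \<longrightarrow> J_adj n k u v) \<and> (\<forall>u v. E u v \<longrightarrow> E v u)"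

definition has_cycle :: "'a set \<Rightarrow> ('a \<Rightarrow> 'a \<Rightarrow> bool) \<Rightarrow> nat \<Rightarrow> bool" where
  "has_cycle V E m \<longleftrightarrow> m \<ge> 3 \<and> (\<exists>f :: nat \<Rightarrow> 'a. inj_on f {..<m} \<and> (\<forall>i<m. f i \<in> V)
       \<and> (\<forall>i<m. E (f i) (f (Suc i mod m))))"

definition H_vert :: "nat \<Rightarrow> nat \<Rightarrow> nat set \<Rightarrow> nat set set" where
  "H_vert n k \<gamma> = {x. x \<subseteq> {1..n} \<and> card x = k \<and> \<gamma> \<subseteq> x}"

definition H_adj :: "nat \<Rightarrow> nat \<Rightarrow> (nat set \<Rightarrow> nat set \<Rightarrow> bool) \<Rightarrow> nat set \<Rightarrow> nat set \<Rightarrow> nat set \<Rightarrow> bool" where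
  "H_adj n k E \<gamma> x y \<longleftrightarrow> x \<in> H_vert n k \<gamma> \<and> y \<in> H_vert n k \<gamma> \<and> x \<noteq> y \<and>
     (\<exists>z. z \<noteq> x \<and> z \<noteq> y \<and> E x z \<and> E z y)"

end

theory Submission
  imports Defs
begin

lemma three_sub:
  assumes fz: "finite z" and cz: "card z = k + 1" and gz: "\<gamma> \<subseteq> z" and cg: "card \<gamma> = k - 1"
    and k: "k \<ge> 1"
    and a: "a \<subseteq> z" "card a = k" "\<gamma> \<subseteq> a"
    and b: "b \<subseteq> z" "card b = k" "\<gamma> \<subseteq> b"
    and c: "c \<subseteq> z" "card c = k" "\<gamma> \<subseteq> c"
  shows "a = b \<or> a = c \<or> b = c"
proof (rule ccontr)
  assume ne: "\<not> (a = b \<or> a = c \<or> b = c)"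
  have cd: "card (z - \<gamma>) = 2" using fz cz gz cg k by (simp add: card_Diff_subset finite_subset)
  have sing: "\<And>w. w \<subseteq> z \<Longrightarrow> card w = k \<Longrightarrow> \<gamma> \<subseteq> w \<Longrightarrow> card (z - w) = 1 \<and> z - w \<subseteq> z - \<gamma>"
    using fz cz by (auto simp: card_Diff_subset finite_subset)
  obtain p q where pq: "z - \<gamma> = {p,q}" using cd unfolding card_2_iff by blast
  have key: "w = z - {p} \<or> w = z - {q}" if w: "w \<subseteq> z" "card w = k" "\<gamma> \<subseteq> w" for w
  proof -
    have c1: "card (z - w) = 1" using sing[OF w] by (rule conjunct1)
    have "z - w \<subseteq> z - \<gamma>" using sing[OF w] by (rule conjunct2)
    then have s1: "z - w \<subseteq> {p,q}" unfolding pq .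
    obtain e where e: "z - w = {e}" using c1 by (rule card_1_singletonE)
    have "e = p \<or> e = q" using e s1 by simp
    moreover have "w = z - {e}" using e w(1) by (metis Diff_Diff_Int inf.absorb_iff2)
    ultimately show ?thesis by blast
  qed
  have ka: "a = z - {p} \<or> a = z - {q}" using key[OF a] .
  have kb: "b = z - {p} \<or> b = z - {q}" using key[OF b] .
  have kc: "c = z - {p} \<or> c = z - {q}" using key[OF c] .
  show False using ka kb kc ne by blast
qed

lemma mid:
  assumes sp: "spanning_subgraph_J n k E" and h: "H_adj n k E \<gamma> x y"
  shows "E x (x \<union> y) \<and> E (x \<union> y) y \<and> card (x \<union> y) = k + 1 \<and> x \<union> y \<subseteq> {1..n}
         \<and> x \<subseteq> {1..n} \<and> card x = k \<and> \<gamma> \<subseteq> x \<and> x \<subseteq> x \<union> y \<and> \<gamma> \<subseteq> x \<union> y"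
proof -
  from h obtain z where xy: "x \<in> H_vert n k \<gamma>" "y \<in> H_vert n k \<gamma>" "x \<noteq> y"
    and z: "z \<noteq> x" "z \<noteq> y" "E x z" "E z y"
    unfolding H_adj_def by blast
  have cx: "card x = k" "x \<subseteq> {1..n}" "\<gamma> \<subseteq> x" using xy(1) by (auto simp: H_vert_def)
  have cy: "card y = k" "y \<subseteq> {1..n}" using xy(2) by (auto simp: H_vert_def)
  have j1: "J_adj n k x z" and j2: "J_adj n k z y" using sp z unfolding spanning_subgraph_J_def by auto
  have zv: "z \<subseteq> {1..n}" "card z = k \<or> card z = k + 1" using j1 unfolding J_adj_def J_vert_def by auto
  have fz: "finite z" using zv(1) finite_subset by blast
  have fx: "finite x" using cx(2) finite_subset by blast
  have fy: "finite y" using cy(2) finite_subset by blast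
  have "x \<subset> z \<or> z \<subset> x" using j1 unfolding J_adj_def by auto
  moreover have "\<not> z \<subset> x"
  proof
    assume "z \<subset> x" then have "card z < k" using psubset_card_mono fx cx(1) by metis
    then show False using zv(2) by auto
  qed
  ultimately have xz: "x \<subset> z" by blast
  have "y \<subset> z \<or> z \<subset> y" using j2 unfolding J_adj_def by auto
  moreover have "\<not> z \<subset> y"
  proof
    assume "z \<subset> y" then have "card z < k" using psubset_card_mono fy cy(1) by metis
    then show False using zv(2) by auto
  qed
  ultimately have yz: "y \<subset> z" by blast
  have cz: "card z = k + 1" using psubset_card_mono[OF fz xz] cx(1) zv(2) by auto
  have "\<not> y \<subseteq> x" using card_subset_eq[OF fx _ ] cx(1) cy(1) xy(3) by metis
  then have "x \<subset> x \<union> y" by blast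
  then have "card (x \<union> y) > k" using psubset_card_mono fx fy cx(1) by (metis finite_Un)
  moreover have sub: "x \<union> y \<subseteq> z" using xz yz by blast
  ultimately have "x \<union> y = z" using card_subset_eq[OF fz sub] card_mono[OF fz sub] cz by linarith
  then show ?thesis using z cz zv cx by auto
qed

lemma modfacts:
  fixes i m :: nat assumes "m \<ge> 3" "i < m"
  shows "Suc i mod m \<noteq> i" "Suc (Suc i mod m) mod m \<noteq> i" "Suc i mod m < m"
proof -
  show "Suc i mod m \<noteq> i" using assms
  proof (cases "Suc i < m")
    case False
    then have "Suc i = m" using assms by simp
    then show ?thesis using assms by simp
  qed simp
  have "Suc (Suc i mod m) mod m = (i + 2) mod m" by (simp add: mod_Suc_eq)
  moreover have "(i + 2) mod m \<noteq> i"
  proof (cases "i + 2 < m")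
    case True then show ?thesis by simp
  next
    case False
    then have "(i + 2) mod m = i + 2 - m" using assms by (simp add: mod_if le_mod_geq)
    then show ?thesis using assms False by linarith
  qed
  ultimately show "Suc (Suc i mod m) mod m \<noteq> i" by simp
  show "Suc i mod m < m" using assms by simp
qed

theorem proposition5p1:
  fixes n k m :: nat and E :: "nat set \<Rightarrow> nat set \<Rightarrow> bool" and \<gamma> :: "nat set"
  assumes "k \<ge> 1" and "n \<ge> 2 * k + 1"
    and "spanning_subgraph_J n k E"
    and "m \<ge> 3"
    and "\<gamma> \<subseteq> {1..n}" and "card \<gamma> = k - 1"
    and "has_cycle (H_vert n k \<gamma>) (H_adj n k E \<gamma>) m"
  shows "has_cycle (J_vert n k) E (2 * m)"
proof -
  obtain f0 where inj: "inj_on f0 {..<m}" and adj: "\<And>i. i < m \<Longrightarrow> H_adj n k E \<gamma> (f0 i) (f0 (Suc i mod m))"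
    using assms(7) unfolding has_cycle_def by blast
  define s where "s i = Suc i mod m" for i
  define Z where "Z i = f0 i \<union> f0 (s i)" for i
  have M: "\<And>i. i < m \<Longrightarrow> E (f0 i) (Z i) \<and> E (Z i) (f0 (s i)) \<and> card (Z i) = k + 1 \<and> Z i \<subseteq> {1..n}
         \<and> f0 i \<subseteq> {1..n} \<and> card (f0 i) = k \<and> \<gamma> \<subseteq> f0 i \<and> f0 i \<subseteq> Z i \<and> \<gamma> \<subseteq> Z i"
    unfolding Z_def s_def using mid[OF assms(3) adj] by blast
  have sm: "\<And>i. i < m \<Longrightarrow> s i < m \<and> s i \<noteq> i \<and> s (s i) \<noteq> i"
    unfolding s_def using modfacts assms(4) by blast
  have M2: "\<And>i. i < m \<Longrightarrow> f0 (s i) \<subseteq> Z i" unfolding Z_def by blast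
  have Zinj: "Z i \<noteq> Z j" if ij: "i < m" "j < m" "i \<noteq> j" for i j
  proof
    assume eq: "Z i = Z j"
    let ?z = "Z i"
    have fz: "finite ?z" using M[OF ij(1)] finite_subset by blast
    have P: "\<And>t. t < m \<Longrightarrow> f0 t \<subseteq> ?z \<Longrightarrow> f0 t \<subseteq> ?z \<and> card (f0 t) = k \<and> \<gamma> \<subseteq> f0 t"
      using M by blast
    have inc: "f0 i \<subseteq> ?z" "f0 (s i) \<subseteq> ?z" "f0 j \<subseteq> ?z" "f0 (s j) \<subseteq> ?z"
    proof -
      show "f0 i \<subseteq> ?z" using M[OF ij(1)] by blast
      show "f0 (s i) \<subseteq> ?z" using M2[OF ij(1)] by blast
      show "f0 j \<subseteq> ?z" using M[OF ij(2)] eq by simp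
      show "f0 (s j) \<subseteq> ?z" using M2[OF ij(2)] eq by simp
    qed
    have base: "finite ?z" "card ?z = k + 1" "\<gamma> \<subseteq> ?z" "card \<gamma> = k - 1" "k \<ge> 1"
      using fz M[OF ij(1)] assms by auto
    show False
    proof (cases "j = s i")
      case False
      have "f0 i = f0 (s i) \<or> f0 i = f0 j \<or> f0 (s i) = f0 j"
        using three_sub[OF base, of "f0 i" "f0 (s i)" "f0 j"] P[OF ij(1) inc(1)] P[OF sm[THEN conjunct1, OF ij(1)] inc(2)] P[OF ij(2) inc(3)] by blast
      then show False using inj sm ij False unfolding inj_on_def by (metis lessThan_iff)
    next
      case True
      have "f0 i = f0 j \<or> f0 i = f0 (s j) \<or> f0 j = f0 (s j)"
        using three_sub[OF base, of "f0 i" "f0 j" "f0 (s j)"] P[OF ij(1) inc(1)] P[OF ij(2) inc(3)] P[OF sm[THEN conjunct1, OF ij(2)] inc(4)] by blast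
      then show False using inj sm ij True unfolding inj_on_def by (metis lessThan_iff)
    qed
  qed
  define g where "g t = (if even t then f0 (t div 2) else Z (t div 2))" for t
  have gv: "g t \<in> J_vert n k" if "t < 2 * m" for t
    using M[of "t div 2"] that unfolding g_def J_vert_def by auto
  have gc: "card (g t) = (if even t then k else k + 1)" if "t < 2 * m" for t
    using M[of "t div 2"] that unfolding g_def by auto
  have ginj: "inj_on g {..<2*m}"
  proof (rule inj_onI)
    fix a b assume a: "a \<in> {..<2*m}" and b: "b \<in> {..<2*m}" and e: "g a = g b"
    have ab: "a div 2 < m" "b div 2 < m" using a b by auto
    have par: "even a = even b" using gc[of a] gc[of b] a b e by (auto split: if_splits)
    show "a = b"
    proof (cases "even a")
      case True
      then have "f0 (a div 2) = f0 (b div 2)" using e par unfolding g_def by auto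
      then have "a div 2 = b div 2" using inj ab unfolding inj_on_def by auto
      then show ?thesis using par True by (metis dvd_mult_div_cancel)
    next
      case False
      then have "Z (a div 2) = Z (b div 2)" using e par unfolding g_def by auto
      then have "a div 2 = b div 2" using Zinj ab by blast
      then show ?thesis using par False by (metis odd_two_times_div_two_succ)
    qed
  qed
  have gadj: "E (g t) (g (Suc t mod (2 * m)))" if t: "t < 2 * m" for t
  proof (cases "even t")
    case True
    then have "Suc t < 2 * m" using t by (metis Suc_lessI even_Suc even_mult_iff even_numeral)
    then have "g (Suc t mod (2*m)) = Z (t div 2)" using True unfolding g_def by auto
    then show ?thesis using M[of "t div 2"] t True unfolding g_def by auto
  next
    case False
    obtain i where ti: "t = 2 * i + 1" using False oddE by blast
    have im: "i < m" using t ti by auto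
    have "Suc t = 2 * Suc i" using ti by simp
    then have "Suc t mod (2*m) = 2 * (s i)"
      unfolding s_def by (simp only: mult_mod_right)
    then have "g (Suc t mod (2*m)) = f0 (s i)" unfolding g_def by auto
    moreover have "g t = Z i" using ti unfolding g_def by auto
    ultimately show ?thesis using M[OF im] by auto
  qed
  have "2 * m \<ge> 3" using assms(4) by simp
  moreover have "\<exists>f :: nat \<Rightarrow> nat set. inj_on f {..<2*m} \<and> (\<forall>i<2*m. f i \<in> J_vert n k)
       \<and> (\<forall>i<2*m. E (f i) (f (Suc i mod (2*m))))"
    using ginj gv gadj by blast
  ultimately show ?thesis unfolding has_cycle_def by blast
qed

end
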